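(* For a matroid $M$ of rank $r$ on $E=\{0,\dots,n\}$, \[ \int_{X_E} c(\mathcal Q_M) = \begin{cases}1 & \text{if $M$ is a loop, or $M=U_{1,E}$},\\ 0&\text{otherwise,}\end{cases}\qquad \int_{X_E} c(\mathcal S_M^{\vee}) = \begin{cases}1 & \text{if $M$ is a coloop, or $M=U_{n,E}$},\\ 0&\text{otherwise.}\end{cases} \]
   Context: $X_E$ is the $n$-dimensional permutohedral variety with $T=(\mathbb C^* )^E$-fixed points $p_\sigma$ indexed by permutations $\sigma$ of $E$, and $K_T^0(X_E)$ embeds into $\prod_\sigma\mathbb Z[T_0^{\pm1},\dots,T_n^{\pm1}]$ via restriction. $B_\sigma(M)$ is the lexicographically first basis of $M$ for the order $\sigma(0)\prec\cdots\prec\sigma(n)$; $[\mathcal S_M],[\mathcal Q_M]\in K_T^0(X_E)$ are the classes restricting at $p_\sigma$ to $\sum_{i\in B_\sigma(M)}T_i^{-1}$ and $\sum_{i\notin B_\sigma(M)}T_i^{-1}$; $c(\cdot)$ is the total non-equivariant Chern class, $\vee$ the dual. A loop (resp. coloop) as a matroid means a matroid of rank $0$ (resp. $1$) on a one-element ground set; $U_{r,E}$ is the uniform matroid of rank $r$ on $E$. *)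

theory Defs
  imports Complex_Main "HOL-Combinatorics.Permutations" "HOL-Library.List_Lexorder"
begin

definition matroid_bases :: "nat \<Rightarrow> nat set set \<Rightarrow> bool" where
  "matroid_bases n Bs \<longleftrightarrow> Bs \<noteq> {} \<and> (\<forall>B\<in>Bs. B \<subseteq> {..n}) \<and>
     (\<forall>B1\<in>Bs. \<forall>B2\<in>Bs. \<forall>x\<in>B1 - B2. \<exists>y\<in>B2 - B1. insert y (B1 - {x}) \<in> Bs)"

definition uniform_bases :: "nat \<Rightarrow> nat \<Rightarrow> nat set set" where
  "uniform_bases n k = {B. B \<subseteq> {..n} \<and> card B = k}"

definition is_loop :: "nat \<Rightarrow> nat set set \<Rightarrow> bool" where
  "is_loop n Bs \<longleftrightarrow> n = 0 \<and> Bs = {{}}"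

definition is_coloop :: "nat \<Rightarrow> nat set set \<Rightarrow> bool" where
  "is_coloop n Bs \<longleftrightarrow> n = 0 \<and> Bs = {{0}}"

text \<open>B_sigma(M): the lexicographically first basis for the order
  sigma(0) < ... < sigma(n); a basis is encoded by the increasing list of
  positions of its elements in this order, and lists are compared lexicographically.\<close>
definition lexfirst_basis :: "(nat \<Rightarrow> nat) \<Rightarrow> nat set set \<Rightarrow> nat set" where
  "lexfirst_basis \<sigma> Bs = arg_min (\<lambda>B. sorted_list_of_set (inv \<sigma> ` B)) (\<lambda>B. B \<in> Bs)"

text \<open>Elementary symmetric function e_k of the values x i, i in A (degree-k part of
  the total Chern class with Chern roots x i).\<close>
definition elem_sym :: "nat \<Rightarrow> nat set \<Rightarrow> (nat \<Rightarrow> real) \<Rightarrow> real" where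
  "elem_sym k A x = (\<Sum>S\<in>{S. S \<subseteq> A \<and> card S = k}. \<Prod>i\<in>S. x i)"

text \<open>Integral over X_E of an equivariant class given by its restrictions f sigma t to the
  fixed points p_sigma, via Atiyah--Bott localization: the tangent weights at p_sigma
  are t(sigma i) - t(sigma (i+1)), i < n.\<close>
definition perm_integral :: "nat \<Rightarrow> ((nat \<Rightarrow> nat) \<Rightarrow> (nat \<Rightarrow> real) \<Rightarrow> real) \<Rightarrow> (nat \<Rightarrow> real) \<Rightarrow> real" where
  "perm_integral n f t = (\<Sum>\<sigma>\<in>{\<sigma>. \<sigma> permutes {..n}}.
       f \<sigma> t / (\<Prod>i<n. t (\<sigma> i) - t (\<sigma> (Suc i))))"

text \<open>Degree-n part of c(Q_M) at p_sigma: Chern roots -t_i (character T_i^-1), i not in B_sigma(M).\<close>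
definition cQ_top :: "nat \<Rightarrow> nat set set \<Rightarrow> (nat \<Rightarrow> nat) \<Rightarrow> (nat \<Rightarrow> real) \<Rightarrow> real" where
  "cQ_top n Bs \<sigma> t = elem_sym n ({..n} - lexfirst_basis \<sigma> Bs) (\<lambda>i. - t i)"

text \<open>Degree-n part of c(S_M dual) at p_sigma: Chern roots t_i (character T_i), i in B_sigma(M).\<close>
definition cSdual_top :: "nat \<Rightarrow> nat set set \<Rightarrow> (nat \<Rightarrow> nat) \<Rightarrow> (nat \<Rightarrow> real) \<Rightarrow> real" where
  "cSdual_top n Bs \<sigma> t = elem_sym n (lexfirst_basis \<sigma> Bs) t"

end

theory Submission
  imports Defs "HOL-Combinatorics.Multiset_Permutations"
begin

fun Wl :: "real list \<Rightarrow> real" where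
  "Wl (x # y # ys) = (x - y) * Wl (y # ys)"
| "Wl _ = 1"

lemma perm_sum_rec:
  assumes "finite V" "V \<noteq> {}"
  shows "(\<Sum>xs\<in>permutations_of_set V. h xs) =
         (\<Sum>v\<in>V. \<Sum>ys\<in>permutations_of_set (V - {v}). h (v # ys))"
proof -
  have "(\<Sum>xs\<in>permutations_of_set V. h xs) =
        (\<Sum>v\<in>V. \<Sum>xs\<in>(\<lambda>ys. v # ys) ` permutations_of_set (V - {v}). h xs)"
    using assms
    by (subst permutations_of_set_nonempty[OF assms(2)], subst sum.UNION_disjoint) auto
  also have "\<dots> = (\<Sum>v\<in>V. \<Sum>ys\<in>permutations_of_set (V - {v}). h (v # ys))"
    by (rule sum.cong[OF refl], subst sum.reindex) (auto simp: inj_on_def)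
  finally show ?thesis .
qed

lemma prod_nz:
  fixes t :: "nat \<Rightarrow> real"
  assumes "finite R" "z \<notin> t ` R"
  shows "(\<Prod>w\<in>R. z - t w) \<noteq> 0"
  using assms by (auto simp: prod_zero_iff)

lemma prod_nz2:
  fixes t :: "nat \<Rightarrow> real"
  assumes "finite R" "inj_on t (insert v R)"
  shows "(\<Prod>w\<in>R - {v}. t v - t w) \<noteq> 0"
  using assms by (auto simp: prod_zero_iff inj_on_def)

lemma pf_aux: fixes z a b c :: real assumes "z \<noteq> a" "z \<noteq> b" "a \<noteq> b" "c \<noteq> 0"
 shows "1/((z-a)*((a-b)*c)) = 1/(z-b)*(1/((z-a)*c) - 1/((b-a)*c))"
proof -
  have h: "z - a \<noteq> 0" "z-b\<noteq>0" "a-b\<noteq>0" "b-a\<noteq>0" using assms by auto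
  show ?thesis using h assms by (simp add: divide_simps) (simp add: algebra_simps)
qed

lemma pf_aux2: fixes z b A B :: real assumes "z \<noteq> b" "A \<noteq> 0" "B \<noteq> 0"
 shows "1/((z-b)*B) + 1/(z-b)*(1/A - 1/B) = 1/((z-b)*A)"
proof -
  have h: "z - b \<noteq> 0" using assms by auto
  show ?thesis using h assms by (simp add: divide_simps)
qed

lemma PF:
  fixes t :: "nat \<Rightarrow> real"
  assumes "finite R" "R \<noteq> {}" "inj_on t R" "z \<notin> t ` R"
  shows "(\<Sum>v\<in>R. 1 / ((z - t v) * (\<Prod>w\<in>R-{v}. t v - t w))) = 1 / (\<Prod>w\<in>R. z - t w)"
  using assms
proof (induction R arbitrary: z rule: finite_ne_induct)
  case (singleton x) then show ?case by simp
next
  case (insert p R)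
  have inj: "inj_on t R" and tp: "t p \<notin> t ` R" using insert.prems insert.hyps by auto
  have z: "z \<notin> t ` R" "z \<noteq> t p" using insert.prems by auto
  define c where "c v = (\<Prod>w\<in>R-{v}. t v - t w)" for v
  have c0: "c v \<noteq> 0" if "v \<in> R" for v
    unfolding c_def using prod_nz2[of R t v] inj insert.hyps that by (simp add: insert_absorb)
  have IH1: "(\<Sum>v\<in>R. 1/((z - t v) * c v)) = 1/(\<Prod>w\<in>R. z - t w)"
    using insert.IH[OF inj z(1)] by (simp add: c_def)
  have IH2: "(\<Sum>v\<in>R. 1/((t p - t v) * c v)) = 1/(\<Prod>w\<in>R. t p - t w)"
    using insert.IH[OF inj tp] by (simp add: c_def)
  have trm: "1/((z - t v) * (\<Prod>w\<in>insert p R - {v}. t v - t w)) =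
      1/(z - t p) * (1/((z - t v) * c v) - 1/((t p - t v) * c v))" if v: "v \<in> R" for v
  proof -
    have "insert p R - {v} = insert p (R - {v})" using v insert.hyps by auto
    then have P: "(\<Prod>w\<in>insert p R - {v}. t v - t w) = (t v - t p) * c v"
      using insert.hyps by (simp add: c_def)
    have "z \<noteq> t v" "t v \<noteq> t p" "z \<noteq> t p"
      using z v tp by (metis image_eqI)+
    then show ?thesis unfolding P using c0[OF v] pf_aux by simp
  qed
  have "(\<Sum>v\<in>insert p R. 1 / ((z - t v) * (\<Prod>w\<in>insert p R-{v}. t v - t w)))
      = 1/((z - t p) * (\<Prod>w\<in>R. t p - t w)) + (\<Sum>v\<in>R. 1/(z - t p) * (1/((z - t v) * c v) - 1/((t p - t v) * c v)))"
    using insert.hyps trm by (simp add: insert_Diff_if)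
  also have "\<dots> = 1/((z - t p) * (\<Prod>w\<in>R. t p - t w)) + 1/(z - t p) * (1/(\<Prod>w\<in>R. z - t w) - 1/(\<Prod>w\<in>R. t p - t w))"
    unfolding sum_distrib_left[symmetric] sum_subtractf IH1 IH2 ..
  also have "\<dots> = 1/((z - t p) * (\<Prod>w\<in>R. z - t w))"
    using insert.hyps prod_nz[of R z t] prod_nz[of R "t p" t] z tp by (intro pf_aux2) auto
  also have "\<dots> = 1 / (\<Prod>w\<in>insert p R. z - t w)"
    using insert.hyps by simp
  finally show ?case .
qed

lemma Zsum:
  fixes t :: "nat \<Rightarrow> real"
  assumes "finite U" "U \<noteq> {}" "p \<notin> U" "inj_on t (insert p U)"
  shows "(\<Sum>v\<in>insert p U. 1 / (\<Prod>w\<in>insert p U - {v}. t v - t w)) = 0"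
proof -
  have inj: "inj_on t U" and tp: "t p \<notin> t ` U" using assms by auto
  define c where "c v = (\<Prod>w\<in>U-{v}. t v - t w)" for v
  have trm: "1 / (\<Prod>w\<in>insert p U - {v}. t v - t w) = - (1 / ((t p - t v) * c v))" if v: "v \<in> U" for v
  proof -
    have "insert p U - {v} = insert p (U - {v})" using v assms by auto
    then have P: "(\<Prod>w\<in>insert p U - {v}. t v - t w) = (t v - t p) * c v"
      using assms by (simp add: c_def)
    have "(t v - t p) = - (t p - t v)" by simp
    then show ?thesis unfolding P by (simp add: divide_simps)
  qed
  have "(\<Sum>v\<in>insert p U. 1 / (\<Prod>w\<in>insert p U - {v}. t v - t w))
     = 1 / (\<Prod>w\<in>U. t p - t w) + (\<Sum>v\<in>U. - (1 / ((t p - t v) * c v)))"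
    using assms trm by (simp add: insert_Diff_if)
  also have "\<dots> = 1 / (\<Prod>w\<in>U. t p - t w) - (\<Sum>v\<in>U. 1 / ((t p - t v) * c v))"
    by (simp add: sum_negf)
  also have "(\<Sum>v\<in>U. 1 / ((t p - t v) * c v)) = 1 / (\<Prod>w\<in>U. t p - t w)"
    unfolding c_def using PF[OF assms(1,2) inj tp] .
  finally show ?thesis by simp
qed

lemma LG:
  fixes t :: "nat \<Rightarrow> real"
  assumes "finite U" "U \<noteq> {}" "inj_on t U"
  shows "(\<Sum>v\<in>U. (\<Prod>w\<in>U-{v}. z - t w) / (\<Prod>w\<in>U-{v}. t v - t w)) = 1"
proof (cases "z \<in> t ` U")
  case True
  then obtain u where u: "u \<in> U" "z = t u" by auto
  have "(\<Sum>v\<in>U. (\<Prod>w\<in>U-{v}. z - t w) / (\<Prod>w\<in>U-{v}. t v - t w))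
      = (\<Prod>w\<in>U-{u}. z - t w) / (\<Prod>w\<in>U-{u}. t u - t w) + (\<Sum>v\<in>U-{u}. (\<Prod>w\<in>U-{v}. z - t w) / (\<Prod>w\<in>U-{v}. t v - t w))"
    using assms u by (simp add: sum.remove)
  also have "(\<Sum>v\<in>U-{u}. (\<Prod>w\<in>U-{v}. z - t w) / (\<Prod>w\<in>U-{v}. t v - t w)) = 0"
  proof (rule sum.neutral, intro ballI)
    fix v assume v: "v \<in> U - {u}"
    have "(\<Prod>w\<in>U-{v}. z - t w) = 0" using u v assms by (auto simp: prod_zero_iff)
    then show "(\<Prod>w\<in>U-{v}. z - t w) / (\<Prod>w\<in>U-{v}. t v - t w) = 0" by simp
  qed
  also have "(\<Prod>w\<in>U-{u}. t u - t w) \<noteq> 0" using prod_nz2[of U t u] assms u by (simp add: insert_absorb)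
  ultimately show ?thesis using u by simp
next
  case False
  have "(\<Sum>v\<in>U. (\<Prod>w\<in>U-{v}. z - t w) / (\<Prod>w\<in>U-{v}. t v - t w))
      = (\<Sum>v\<in>U. (\<Prod>w\<in>U. z - t w) * (1 / ((z - t v) * (\<Prod>w\<in>U-{v}. t v - t w))))"
  proof (rule sum.cong[OF refl])
    fix v assume v: "v \<in> U"
    have P: "(\<Prod>w\<in>U. z - t w) = (z - t v) * (\<Prod>w\<in>U-{v}. z - t w)"
      using v assms by (simp add: prod.remove)
    have "z - t v \<noteq> 0" using False v by auto
    then show "(\<Prod>w\<in>U-{v}. z - t w) / (\<Prod>w\<in>U-{v}. t v - t w) = (\<Prod>w\<in>U. z - t w) * (1 / ((z - t v) * (\<Prod>w\<in>U-{v}. t v - t w)))"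
      unfolding P by (simp add: divide_simps)
  qed
  also have "\<dots> = (\<Prod>w\<in>U. z - t w) * (1 / (\<Prod>w\<in>U. z - t w))"
    unfolding sum_distrib_left[symmetric] PF[OF assms False] ..
  also have "\<dots> = 1" using prod_nz[OF assms(1) False] by simp
  finally show ?thesis .
qed

lemma Wl_cons2: "Wl (z # x # xs) = (z - x) * Wl (x # xs)" by simp

lemma Ssum:
  fixes t :: "nat \<Rightarrow> real"
  assumes "finite R" "inj_on t R" "z \<notin> t ` R"
  shows "(\<Sum>xs\<in>permutations_of_set R. 1 / Wl (z # map t xs)) = 1 / (\<Prod>w\<in>R. z - t w)"
  using assms
proof (induction R arbitrary: z rule: finite_remove_induct)
  case empty then show ?case by simp
next
  case (remove R)
  have "(\<Sum>xs\<in>permutations_of_set R. 1 / Wl (z # map t xs))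
      = (\<Sum>v\<in>R. \<Sum>ys\<in>permutations_of_set (R - {v}). 1 / Wl (z # t v # map t ys))"
    using perm_sum_rec[OF remove(1,2), of "\<lambda>xs. 1 / Wl (z # map t xs)"] by simp
  also have "\<dots> = (\<Sum>v\<in>R. 1 / ((z - t v) * (\<Prod>w\<in>R-{v}. t v - t w)))"
  proof (rule sum.cong[OF refl])
    fix v assume v: "v \<in> R"
    have inj: "inj_on t (R - {v})" using remove.prems inj_on_subset by blast
    have tv: "t v \<notin> t ` (R - {v})" using remove.prems v by (auto simp: inj_on_def)
    have "(\<Sum>ys\<in>permutations_of_set (R - {v}). 1 / Wl (z # t v # map t ys))
        = (\<Sum>ys\<in>permutations_of_set (R - {v}). 1 / (z - t v) * (1 / Wl (t v # map t ys)))"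
      by simp
    also have "\<dots> = 1 / (z - t v) * (1 / (\<Prod>w\<in>R-{v}. t v - t w))"
      unfolding sum_distrib_left[symmetric] remove.IH[OF v inj tv] ..
    finally show "(\<Sum>ys\<in>permutations_of_set (R - {v}). 1 / Wl (z # t v # map t ys)) = 1 / ((z - t v) * (\<Prod>w\<in>R-{v}. t v - t w))"
      by simp
  qed
  also have "\<dots> = 1 / (\<Prod>w\<in>R. z - t w)"
    using PF[OF remove(1,2)] remove.prems by blast
  finally show ?case .
qed

lemma PF_ins:
  fixes t :: "nat \<Rightarrow> real"
  assumes "finite D" "a \<notin> D" "inj_on t (insert a D)" "z \<notin> t ` insert a D"
  shows "1/((z - t a) * (\<Prod>d\<in>D. t a - t d)) + (\<Sum>v\<in>D. 1/((z - t v) * ((t v - t a) * (\<Prod>d\<in>D-{v}. t v - t d))))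
         = 1/((z - t a) * (\<Prod>d\<in>D. z - t d))"
proof -
  have eq: "(\<Sum>v\<in>insert a D. 1 / ((z - t v) * (\<Prod>w\<in>insert a D-{v}. t v - t w)))
     = 1/((z - t a) * (\<Prod>d\<in>D. t a - t d)) + (\<Sum>v\<in>D. 1/((z - t v) * ((t v - t a) * (\<Prod>d\<in>D-{v}. t v - t d))))"
  proof -
    have "(\<Sum>v\<in>D. 1 / ((z - t v) * (\<Prod>w\<in>insert a D-{v}. t v - t w))) = (\<Sum>v\<in>D. 1/((z - t v) * ((t v - t a) * (\<Prod>d\<in>D-{v}. t v - t d))))"
    proof (rule sum.cong[OF refl])
      fix v assume v: "v \<in> D"
      have "insert a D - {v} = insert a (D - {v})" using v assms by auto
      then show "1 / ((z - t v) * (\<Prod>w\<in>insert a D-{v}. t v - t w)) = 1/((z - t v) * ((t v - t a) * (\<Prod>d\<in>D-{v}. t v - t d)))"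
        using assms by simp
    qed
    moreover have "insert a D - {a} = D" using assms by auto
    ultimately show ?thesis using assms by simp
  qed
  have "(\<Sum>v\<in>insert a D. 1 / ((z - t v) * (\<Prod>w\<in>insert a D-{v}. t v - t w))) = 1 / (\<Prod>w\<in>insert a D. z - t w)"
    by (rule PF) (use assms in auto)
  then show ?thesis using assms eq by simp
qed

lemma Z_ins:
  fixes t :: "nat \<Rightarrow> real"
  assumes "finite D" "D \<noteq> {}" "a \<notin> D" "inj_on t (insert a D)"
  shows "1/(\<Prod>d\<in>D. t a - t d) + (\<Sum>v\<in>D. 1/((t v - t a) * (\<Prod>d\<in>D-{v}. t v - t d))) = 0"
proof -
  have eq: "(\<Sum>v\<in>insert a D. 1 / (\<Prod>w\<in>insert a D-{v}. t v - t w))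
     = 1/(\<Prod>d\<in>D. t a - t d) + (\<Sum>v\<in>D. 1/((t v - t a) * (\<Prod>d\<in>D-{v}. t v - t d)))"
  proof -
    have "(\<Sum>v\<in>D. 1 / (\<Prod>w\<in>insert a D-{v}. t v - t w)) = (\<Sum>v\<in>D. 1/((t v - t a) * (\<Prod>d\<in>D-{v}. t v - t d)))"
    proof (rule sum.cong[OF refl])
      fix v assume v: "v \<in> D"
      have "insert a D - {v} = insert a (D - {v})" using v assms by auto
      then show "1 / (\<Prod>w\<in>insert a D-{v}. t v - t w) = 1/((t v - t a) * (\<Prod>d\<in>D-{v}. t v - t d))"
        using assms by simp
    qed
    moreover have "insert a D - {a} = D" using assms by auto
    ultimately show ?thesis using assms by simp
  qed
  then show ?thesis using Zsum[OF assms(1,2,3,4)] by simp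
qed

fun fstA :: "nat set \<Rightarrow> nat list \<Rightarrow> nat" where
  "fstA A [] = 0"
| "fstA A (x # xs) = (if x \<in> A then x else fstA A xs)"

lemma inv_dist3: "(x::real) / (a * (b * c)) = x / b * (1 / (a * c))"
  by (simp add: divide_inverse inverse_mult_distrib ac_simps)

lemma inv_dist4: "1 / (z::real) * (1 / P) * (x / (d * c)) = x / c * (1 / (z * (d * P)))"
  by (simp add: divide_inverse inverse_mult_distrib ac_simps)

lemma inv_dist5: "(x::real) / c * (1 / (z * P)) = 1 / P * (x / (z * c))"
  by (simp add: divide_inverse inverse_mult_distrib ac_simps)

lemma inv_dist6: "1 / (P::real) * (x / (d * c)) = x / c * (1 / (d * P))"
  by (simp add: divide_inverse inverse_mult_distrib ac_simps)

lemma inv_dist7: "(x::real) / (c * P) = x / c * (1 / P)"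
  by (simp add: divide_inverse inverse_mult_distrib ac_simps)

lemma Msum:
  fixes t :: "nat \<Rightarrow> real" and g :: "nat \<Rightarrow> real"
  assumes "finite V" "A \<subseteq> V" "A \<noteq> {}" "inj_on t V" "z \<notin> t ` V"
  shows "(\<Sum>xs\<in>permutations_of_set V. g (fstA A xs) / Wl (z # map t xs))
       = 1/(\<Prod>d\<in>V-A. z - t d) * (\<Sum>a\<in>A. g a / ((z - t a) * (\<Prod>w\<in>A-{a}. t a - t w)))"
  using assms
proof (induction V arbitrary: z rule: finite_remove_induct)
  case empty thus ?case by simp
next
  case (remove V)
  define D where "D = V - A"
  define c where "c a = (\<Prod>w\<in>A-{a}. t a - t w)" for a
  define N where "N y = (\<Sum>a\<in>A. g a / ((y - t a) * c a))" for y
  have finA: "finite A" "finite D" using remove(1) remove.prems(1) finite_subset by (auto simp: D_def)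
  have VAD: "V = A \<union> D" "A \<inter> D = {}" using remove.prems by (auto simp: D_def)
  have step1: "(\<Sum>xs\<in>permutations_of_set V. g (fstA A xs) / Wl (z # map t xs))
     = (\<Sum>v\<in>V. \<Sum>ys\<in>permutations_of_set (V-{v}). g (fstA A (v#ys)) / ((z - t v) * Wl (t v # map t ys)))"
    using perm_sum_rec[OF remove(1,2), of "\<lambda>xs. g (fstA A xs) / Wl (z # map t xs)"] by simp
  have inner: "(\<Sum>ys\<in>permutations_of_set (V-{v}). g (fstA A (v#ys)) / ((z - t v) * Wl (t v # map t ys)))
     = (if v \<in> A then g v / ((z - t v) * (c v * (\<Prod>d\<in>D. t v - t d)))
        else 1/(z - t v) * (1/(\<Prod>d\<in>D-{v}. t v - t d)) * N (t v))" if v: "v \<in> V" for v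
  proof -
    have inj: "inj_on t (V - {v})" using remove.prems inj_on_subset by blast
    have tv: "t v \<notin> t ` (V - {v})" using remove.prems v by (auto simp: inj_on_def)
    have finV': "finite (V - {v})" using remove(1) by simp
    show ?thesis
    proof (cases "v \<in> A")
      case True
      have "(\<Sum>ys\<in>permutations_of_set (V-{v}). g (fstA A (v#ys)) / ((z - t v) * Wl (t v # map t ys)))
          = (\<Sum>ys\<in>permutations_of_set (V-{v}). g v / (z - t v) * (1 / Wl (t v # map t ys)))"
        using True by simp
      also have "\<dots> = g v / (z - t v) * (1 / (\<Prod>w\<in>V-{v}. t v - t w))"
        unfolding sum_distrib_left[symmetric] Ssum[OF finV' inj tv] ..
      also have "(\<Prod>w\<in>V-{v}. t v - t w) = c v * (\<Prod>d\<in>D. t v - t d)"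
      proof -
        have "V - {v} = (A - {v}) \<union> D" "(A - {v}) \<inter> D = {}" using VAD True by auto
        then show ?thesis unfolding c_def using finA by (simp add: prod.union_disjoint)
      qed
      finally show ?thesis using True by simp
    next
      case False
      have AV: "A \<subseteq> V - {v}" using False remove.prems by auto
      have "(\<Sum>ys\<in>permutations_of_set (V-{v}). g (fstA A (v#ys)) / ((z - t v) * Wl (t v # map t ys)))
          = (\<Sum>ys\<in>permutations_of_set (V-{v}). 1 / (z - t v) * (g (fstA A ys) / Wl (t v # map t ys)))"
        using False by simp
      also have "\<dots> = 1 / (z - t v) * ((1/(\<Prod>d\<in>V-{v}-A. t v - t d)) * N (t v))"
        unfolding sum_distrib_left[symmetric] remove.IH[OF v AV remove.prems(2) inj tv] N_def c_def ..
      also have "V - {v} - A = D - {v}" by (auto simp: D_def)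
      finally show ?thesis using False by simp
    qed
  qed
  have "(\<Sum>xs\<in>permutations_of_set V. g (fstA A xs) / Wl (z # map t xs))
     = (\<Sum>v\<in>V. (if v \<in> A then g v / ((z - t v) * (c v * (\<Prod>d\<in>D. t v - t d)))
        else 1/(z - t v) * (1/(\<Prod>d\<in>D-{v}. t v - t d)) * N (t v)))"
    unfolding step1 using inner by (rule sum.cong[OF refl])
  also have "\<dots> = (\<Sum>a\<in>A. g a / ((z - t a) * (c a * (\<Prod>d\<in>D. t a - t d))))
       + (\<Sum>v\<in>D. 1/(z - t v) * (1/(\<Prod>d\<in>D-{v}. t v - t d)) * N (t v))"
    by (subst VAD(1), subst sum.union_disjoint) (use finA VAD in \<open>auto intro!: arg_cong2[where f="(+)"] sum.cong\<close>)
  also have "(\<Sum>a\<in>A. g a / ((z - t a) * (c a * (\<Prod>d\<in>D. t a - t d))))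
      = (\<Sum>a\<in>A. g a / c a * (1/((z - t a) * (\<Prod>d\<in>D. t a - t d))))"
    by (rule sum.cong[OF refl]) (rule inv_dist3)
  also have "(\<Sum>v\<in>D. 1/(z - t v) * (1/(\<Prod>d\<in>D-{v}. t v - t d)) * N (t v))
      = (\<Sum>a\<in>A. g a / c a * (\<Sum>v\<in>D. 1/((z - t v) * ((t v - t a) * (\<Prod>d\<in>D-{v}. t v - t d)))))"
    unfolding N_def sum_distrib_left
    by (subst sum.swap) (rule sum.cong[OF refl], rule sum.cong[OF refl], rule inv_dist4)
  also have "(\<Sum>a\<in>A. g a / c a * (1/((z - t a) * (\<Prod>d\<in>D. t a - t d))))
      + (\<Sum>a\<in>A. g a / c a * (\<Sum>v\<in>D. 1/((z - t v) * ((t v - t a) * (\<Prod>d\<in>D-{v}. t v - t d)))))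
      = (\<Sum>a\<in>A. g a / c a * (1/((z - t a) * (\<Prod>d\<in>D. z - t d))))"
    unfolding sum.distrib[symmetric] distrib_left[symmetric]
  proof (rule sum.cong[OF refl])
    fix a assume a: "a \<in> A"
    have "insert a D \<subseteq> V" using a VAD by auto
    then have i: "inj_on t (insert a D)" and zz: "z \<notin> t ` insert a D" using remove.prems inj_on_subset by blast+
    have aD: "a \<notin> D" using a VAD by auto
    show "g a / c a * (1/((z - t a) * (\<Prod>d\<in>D. t a - t d)) + (\<Sum>v\<in>D. 1/((z - t v) * ((t v - t a) * (\<Prod>d\<in>D-{v}. t v - t d)))))
       = g a / c a * (1/((z - t a) * (\<Prod>d\<in>D. z - t d)))"
      unfolding PF_ins[OF finA(2) aD i zz] ..
  qed
  also have "\<dots> = 1/(\<Prod>d\<in>V-A. z - t d) * (\<Sum>a\<in>A. g a / ((z - t a) * (\<Prod>w\<in>A-{a}. t a - t w)))"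
    unfolding sum_distrib_left D_def c_def by (rule sum.cong[OF refl]) (rule inv_dist5)
  finally show ?case .
qed

lemma Tsum:
  fixes t :: "nat \<Rightarrow> real" and g :: "nat \<Rightarrow> real"
  assumes "finite V" "A \<subseteq> V" "A \<noteq> {}" "inj_on t V"
  shows "(\<Sum>xs\<in>permutations_of_set V. g (fstA A xs) / Wl (map t xs))
       = (if V = A then (\<Sum>a\<in>A. g a / (\<Prod>w\<in>A-{a}. t a - t w)) else 0)"
proof -
  define D where "D = V - A"
  define c where "c a = (\<Prod>w\<in>A-{a}. t a - t w)" for a
  define N where "N y = (\<Sum>a\<in>A. g a / ((y - t a) * c a))" for y
  have V0: "V \<noteq> {}" using assms by auto
  have finA: "finite A" "finite D" using assms rev_finite_subset by (auto simp: D_def)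
  have VAD: "V = A \<union> D" "A \<inter> D = {}" using assms by (auto simp: D_def)
  have step1: "(\<Sum>xs\<in>permutations_of_set V. g (fstA A xs) / Wl (map t xs))
     = (\<Sum>v\<in>V. \<Sum>ys\<in>permutations_of_set (V-{v}). g (fstA A (v#ys)) / Wl (t v # map t ys))"
    using perm_sum_rec[OF assms(1) V0, of "\<lambda>xs. g (fstA A xs) / Wl (map t xs)"] by simp
  have inner: "(\<Sum>ys\<in>permutations_of_set (V-{v}). g (fstA A (v#ys)) / Wl (t v # map t ys))
     = (if v \<in> A then g v / (c v * (\<Prod>d\<in>D. t v - t d))
        else (1/(\<Prod>d\<in>D-{v}. t v - t d)) * N (t v))" if v: "v \<in> V" for v
  proof -
    have inj: "inj_on t (V - {v})" using assms inj_on_subset by blast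
    have tv: "t v \<notin> t ` (V - {v})" using assms v by (auto simp: inj_on_def)
    have finV': "finite (V - {v})" using assms(1) by simp
    show ?thesis
    proof (cases "v \<in> A")
      case True
      have "(\<Sum>ys\<in>permutations_of_set (V-{v}). g (fstA A (v#ys)) / Wl (t v # map t ys))
          = (\<Sum>ys\<in>permutations_of_set (V-{v}). g v * (1 / Wl (t v # map t ys)))"
        using True by simp
      also have "\<dots> = g v * (1 / (\<Prod>w\<in>V-{v}. t v - t w))"
        unfolding sum_distrib_left[symmetric] Ssum[OF finV' inj tv] ..
      also have "(\<Prod>w\<in>V-{v}. t v - t w) = c v * (\<Prod>d\<in>D. t v - t d)"
      proof -
        have "V - {v} = (A - {v}) \<union> D" "(A - {v}) \<inter> D = {}" using VAD True by auto
        then show ?thesis unfolding c_def using finA by (simp add: prod.union_disjoint)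
      qed
      finally show ?thesis using True by simp
    next
      case False
      have AV: "A \<subseteq> V - {v}" using False assms by auto
      have "(\<Sum>ys\<in>permutations_of_set (V-{v}). g (fstA A (v#ys)) / Wl (t v # map t ys))
          = (\<Sum>ys\<in>permutations_of_set (V-{v}). g (fstA A ys) / Wl (t v # map t ys))"
        using False by simp
      also have "\<dots> = (1/(\<Prod>d\<in>V-{v}-A. t v - t d)) * N (t v)"
        unfolding Msum[OF finV' AV assms(3) inj tv] N_def c_def ..
      also have "V - {v} - A = D - {v}" by (auto simp: D_def)
      finally show ?thesis using False by simp
    qed
  qed
  have "(\<Sum>xs\<in>permutations_of_set V. g (fstA A xs) / Wl (map t xs))
     = (\<Sum>v\<in>V. (if v \<in> A then g v / (c v * (\<Prod>d\<in>D. t v - t d))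
        else (1/(\<Prod>d\<in>D-{v}. t v - t d)) * N (t v)))"
    unfolding step1 using inner by (rule sum.cong[OF refl])
  also have "\<dots> = (\<Sum>a\<in>A. g a / (c a * (\<Prod>d\<in>D. t a - t d)))
       + (\<Sum>v\<in>D. (1/(\<Prod>d\<in>D-{v}. t v - t d)) * N (t v))"
    by (subst VAD(1), subst sum.union_disjoint) (use finA VAD in \<open>auto intro!: arg_cong2[where f="(+)"] sum.cong\<close>)
  also have "(\<Sum>a\<in>A. g a / (c a * (\<Prod>d\<in>D. t a - t d)))
      = (\<Sum>a\<in>A. g a / c a * (1/(\<Prod>d\<in>D. t a - t d)))"
    by (rule sum.cong[OF refl]) (rule inv_dist7)
  also have "(\<Sum>v\<in>D. (1/(\<Prod>d\<in>D-{v}. t v - t d)) * N (t v))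
      = (\<Sum>a\<in>A. g a / c a * (\<Sum>v\<in>D. 1/((t v - t a) * (\<Prod>d\<in>D-{v}. t v - t d))))"
    unfolding N_def sum_distrib_left
    by (subst sum.swap) (rule sum.cong[OF refl], rule sum.cong[OF refl], rule inv_dist6)
  also have "(\<Sum>a\<in>A. g a / c a * (1/(\<Prod>d\<in>D. t a - t d)))
      + (\<Sum>a\<in>A. g a / c a * (\<Sum>v\<in>D. 1/((t v - t a) * (\<Prod>d\<in>D-{v}. t v - t d))))
      = (\<Sum>a\<in>A. g a / c a * (1/(\<Prod>d\<in>D. t a - t d) + (\<Sum>v\<in>D. 1/((t v - t a) * (\<Prod>d\<in>D-{v}. t v - t d)))))"
    unfolding sum.distrib[symmetric] distrib_left[symmetric] ..
  finally have main: "(\<Sum>xs\<in>permutations_of_set V. g (fstA A xs) / Wl (map t xs))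
      = (\<Sum>a\<in>A. g a / c a * (1/(\<Prod>d\<in>D. t a - t d) + (\<Sum>v\<in>D. 1/((t v - t a) * (\<Prod>d\<in>D-{v}. t v - t d)))))" .
  show ?thesis
  proof (cases "V = A")
    case True
    then have "D = {}" by (simp add: D_def)
    then show ?thesis using main True by (simp add: c_def)
  next
    case False
    then have D0: "D \<noteq> {}" using assms by (auto simp: D_def)
    have "(\<Sum>a\<in>A. g a / c a * (1/(\<Prod>d\<in>D. t a - t d) + (\<Sum>v\<in>D. 1/((t v - t a) * (\<Prod>d\<in>D-{v}. t v - t d))))) = 0"
    proof (rule sum.neutral, intro ballI)
      fix a assume a: "a \<in> A"
      have "insert a D \<subseteq> V" using a VAD by auto
      then have i: "inj_on t (insert a D)" using assms inj_on_subset by blast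
      have aD: "a \<notin> D" using a VAD by auto
      show "g a / c a * (1/(\<Prod>d\<in>D. t a - t d) + (\<Sum>v\<in>D. 1/((t v - t a) * (\<Prod>d\<in>D-{v}. t v - t d)))) = 0"
        unfolding Z_ins[OF finA(2) D0 aD i] by simp
    qed
    then show ?thesis using main False by simp
  qed
qed


lemma Wl_snoc: "Wl (xs @ [a, b]) = Wl (xs @ [a]) * (a - b)"
  by (induction xs rule: induct_list012) auto

lemma Wl_upt: "Wl (map h [0..<Suc n]) = (\<Prod>i<n. h i - h (Suc i))"
proof (induction n)
  case 0 then show ?case by simp
next
  case (Suc n)
  have "map h [0..<Suc (Suc n)] = map h [0..<n] @ [h n, h (Suc n)]" by simp
  then have "Wl (map h [0..<Suc (Suc n)]) = Wl (map h [0..<Suc n]) * (h n - h (Suc n))"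
    using Wl_snoc[of "map h [0..<n]" "h n" "h (Suc n)"] by simp
  then show ?case using Suc by simp
qed

lemma Wl_rev: "Wl (rev xs) = (-1) ^ (length xs - 1) * Wl xs"
proof (induction xs rule: induct_list012)
  case (3 x y zs)
  have "Wl (rev (x # y # zs)) = Wl (rev zs @ [y, x])" by simp
  also have "\<dots> = Wl (rev (y # zs)) * (y - x)" using Wl_snoc[of "rev zs" y x] by simp
  also have "\<dots> = (-1) ^ (length zs) * Wl (y # zs) * (y - x)" using 3(2) by simp
  also have "\<dots> = (-1) ^ (length (x # y # zs) - 1) * Wl (x # y # zs)" by (simp add: algebra_simps)
  finally show ?case .
qed auto

lemma fstA_min:
  assumes "i < length xs" "xs ! i \<in> A"
  shows "fstA A xs \<in> A \<and> (\<exists>j\<le>i. xs ! j = fstA A xs)"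
  using assms
proof (induction xs arbitrary: i)
  case Nil then show ?case by simp
next
  case (Cons x xs)
  show ?case
  proof (cases "x \<in> A")
    case True then show ?thesis by auto
  next
    case False
    then obtain i' where i: "i = Suc i'" using Cons.prems by (cases i) auto
    then have "fstA A xs \<in> A \<and> (\<exists>j\<le>i'. xs ! j = fstA A xs)" using Cons by auto
    then show ?thesis using False i by force
  qed
qed

lemma perm_bij:
  "bij_betw (\<lambda>\<sigma>. map \<sigma> [0..<Suc n]) {\<sigma>. \<sigma> permutes {..n}} (permutations_of_set {..n})"
proof (rule bij_betwI')
  fix \<sigma> \<tau> assume s: "\<sigma> \<in> {\<sigma>. \<sigma> permutes {..n}}" and t: "\<tau> \<in> {\<sigma>. \<sigma> permutes {..n}}"
  show "(map \<sigma> [0..<Suc n] = map \<tau> [0..<Suc n]) = (\<sigma> = \<tau>)"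
  proof
    assume eq: "map \<sigma> [0..<Suc n] = map \<tau> [0..<Suc n]"
    show "\<sigma> = \<tau>"
    proof
      fix x show "\<sigma> x = \<tau> x"
      proof (cases "x \<le> n")
        case True
        have "map \<sigma> [0..<Suc n] ! x = map \<tau> [0..<Suc n] ! x" using eq by (rule arg_cong)
        then show ?thesis using True by (simp del: upt_Suc)
      next
        case False
        then show ?thesis using s t by (simp add: permutes_def)
      qed
    qed
  qed simp
next
  fix \<sigma> assume s: "\<sigma> \<in> {\<sigma>. \<sigma> permutes {..n}}"
  have eqS: "{0..<Suc n} = {..n}" by auto
  have "inj_on \<sigma> {0..<Suc n}" unfolding eqS using s permutes_inj_on by blast
  moreover have "\<sigma> ` {0..<Suc n} = {..n}" unfolding eqS using s permutes_image by blast
  ultimately show "map \<sigma> [0..<Suc n] \<in> permutations_of_set {..n}"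
    by (intro permutations_of_setI) (simp_all del: upt_Suc add: distinct_map)
next
  fix xs assume xs: "xs \<in> permutations_of_set {..n}"
  have len: "length xs = Suc n" using length_finite_permutations_of_set[OF xs] by simp
  have d: "distinct xs" and st: "set xs = {..n}" using permutations_of_setD[OF xs] by auto
  define \<sigma> where "\<sigma> i = (if i \<le> n then xs ! i else i)" for i
  have "bij_betw \<sigma> {..n} {..n}"
  proof (rule bij_betw_imageI)
    show "inj_on \<sigma> {..n}" using d len by (auto simp: inj_on_def \<sigma>_def nth_eq_iff_index_eq)
    show "\<sigma> ` {..n} = {..n}"
    proof -
      have "\<sigma> ` {..n} = (\<lambda>i. xs ! i) ` {..<length xs}" using len by (auto simp: \<sigma>_def image_def less_Suc_eq_le)
      also have "\<dots> = set xs" by (simp add: set_conv_nth image_def) blast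
      finally show ?thesis using st by simp
    qed
  qed
  then have "\<sigma> permutes {..n}" by (rule bij_imp_permutes) (simp add: \<sigma>_def)
  moreover have "map \<sigma> [0..<Suc n] = xs" using len by (intro nth_equalityI) (auto simp del: upt_Suc simp: \<sigma>_def)
  ultimately show "\<exists>\<sigma>\<in>{\<sigma>. \<sigma> permutes {..n}}. xs = map \<sigma> [0..<Suc n]" by auto
qed

lemma perm_integral_list:
  assumes "\<And>\<sigma>. \<sigma> permutes {..n} \<Longrightarrow> f \<sigma> t = F (map \<sigma> [0..<Suc n])"
  shows "perm_integral n f t = (\<Sum>xs\<in>permutations_of_set {..n}. F xs / Wl (map t xs))"
proof -
  have "perm_integral n f t = (\<Sum>\<sigma>\<in>{\<sigma>. \<sigma> permutes {..n}}. (\<lambda>xs. F xs / Wl (map t xs)) (map \<sigma> [0..<Suc n]))"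
    unfolding perm_integral_def
  proof (rule sum.cong[OF refl])
    fix \<sigma> assume s: "\<sigma> \<in> {\<sigma>. \<sigma> permutes {..n}}"
    have "Wl (map t (map \<sigma> [0..<Suc n])) = (\<Prod>i<n. t (\<sigma> i) - t (\<sigma> (Suc i)))"
      using Wl_upt[of "\<lambda>i. t (\<sigma> i)" n] by (simp only: map_map comp_def)
    then show "f \<sigma> t / (\<Prod>i<n. t (\<sigma> i) - t (\<sigma> (Suc i))) = (\<lambda>xs. F xs / Wl (map t xs)) (map \<sigma> [0..<Suc n])"
      using assms s by simp
  qed
  also have "\<dots> = (\<Sum>xs\<in>permutations_of_set {..n}. F xs / Wl (map t xs))"
    by (rule sum.reindex_bij_betw[OF perm_bij])
  finally show ?thesis .
qed

lemma argmin_unique: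
  fixes f :: "'a \<Rightarrow> 'b::order"
  assumes "P x0" "\<And>y. P y \<Longrightarrow> y \<noteq> x0 \<Longrightarrow> f x0 < f y"
  shows "arg_min f P = x0"
  unfolding arg_min_def
proof (rule some_equality)
  have "\<not> (f y < f x0)" if "P y" for y
  proof (cases "y = x0")
    case True then show ?thesis by simp
  next
    case False then have "f x0 < f y" using assms that by blast
    then show ?thesis using less_asym by blast
  qed
  then show "is_arg_min f P x0" unfolding is_arg_min_def using assms by blast
next
  fix x assume "is_arg_min f P x"
  then show "x = x0" unfolding is_arg_min_def using assms by blast
qed

lemma elem_sym_zero:
  assumes "finite S" "card S < k"
  shows "elem_sym k S x = 0"
proof -
  have E: "{S'. S' \<subseteq> S \<and> card S' = k} = {}"
  proof (intro equalityI subsetI)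
    fix S' assume "S' \<in> {S'. S' \<subseteq> S \<and> card S' = k}"
    then have "S' \<subseteq> S" "card S' = k" by auto
    moreover have "card S' \<le> card S" using assms(1) \<open>S' \<subseteq> S\<close> by (rule card_mono)
    ultimately show "S' \<in> {}" using assms(2) by simp
  qed simp
  show ?thesis unfolding elem_sym_def E by simp
qed

lemma elem_sym_full:
  assumes "finite S"
  shows "elem_sym (card S) S x = (\<Prod>i\<in>S. x i)"
proof -
  have "{S'. S' \<subseteq> S \<and> card S' = card S} = {S}"
  proof (intro equalityI subsetI)
    fix S' assume "S' \<in> {S'. S' \<subseteq> S \<and> card S' = card S}"
    then have "S' \<subseteq> S" "card S' = card S" by auto
    then have "S' = S" using card_subset_eq[OF assms] by simp
    then show "S' \<in> {S}" by simp
  qed simp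
  then show ?thesis unfolding elem_sym_def by simp
qed


lemma bases_card:
  assumes M: "matroid_bases n Bs" and B1: "B1 \<in> Bs" and B2: "B2 \<in> Bs"
  shows "card B1 = card B2"
  using B1
proof (induction "card (B1 - B2)" arbitrary: B1)
  case 0
  have fin: "finite B1" "finite B2" using M 0 B2 unfolding matroid_bases_def by (meson finite_atMost finite_subset)+
  then have sub: "B1 \<subseteq> B2" using 0 by auto
  have "B1 = B2"
  proof (rule ccontr)
    assume "B1 \<noteq> B2"
    then obtain x where "x \<in> B2 - B1" using sub by auto
    then obtain y where "y \<in> B1 - B2" using M B2 0(2) unfolding matroid_bases_def by blast
    then show False using sub by auto
  qed
  then show ?case by simp
next
  case (Suc k)
  have fin: "finite B1" "finite B2" using M Suc B2 unfolding matroid_bases_def by (meson finite_atMost finite_subset)+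
  obtain x where x: "x \<in> B1 - B2" using Suc(2) by (metis card.empty ex_in_conv nat.distinct(1))
  then obtain y where y: "y \<in> B2 - B1" and B1': "insert y (B1 - {x}) \<in> Bs"
    using M B2 Suc(3) unfolding matroid_bases_def by blast
  have "insert y (B1 - {x}) - B2 = (B1 - B2) - {x}" using y by auto
  then have "card (insert y (B1 - {x}) - B2) = k" using Suc(2) x fin by simp
  then have "card (insert y (B1 - {x})) = card B2" using Suc(1) B1' by blast
  moreover have "card (insert y (B1 - {x})) = card B1" using x y fin by (simp add: card.insert_remove) (metis Suc_pred card_gt_0_iff empty_iff)
  ultimately show ?case by simp
qed


lemma inv_pos:
  assumes "\<sigma> permutes {..n}" "a \<le> n"
  shows "inv \<sigma> a \<le> n" "map \<sigma> [0..<Suc n] ! (inv \<sigma> a) = a" "\<sigma> (inv \<sigma> a) = a"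
proof -
  have "inv \<sigma> permutes {..n}" using assms(1) by (rule permutes_inv)
  then show i: "inv \<sigma> a \<le> n" using assms(2) permutes_in_image by fastforce
  show "\<sigma> (inv \<sigma> a) = a" using assms(1) permutes_inverses(1) by fastforce
  then show "map \<sigma> [0..<Suc n] ! (inv \<sigma> a) = a" using i by (simp del: upt_Suc add: nth_map)
qed

lemma singleton_less: "[a] < [b] \<longleftrightarrow> (a::nat) < b"
  by simp

lemma append_less: "(a::nat) < b \<Longrightarrow> u @ a # x < u @ b # y"
  by (induction u) auto

lemma lex_first_singletons:
  assumes s: "\<sigma> permutes {..n}" and A: "A \<subseteq> {..n}" "A \<noteq> {}" and Bs: "Bs = (\<lambda>a. {a}) ` A"
  shows "lexfirst_basis \<sigma> Bs = {fstA A (map \<sigma> [0..<Suc n])}"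
proof -
  define xs where "xs = map \<sigma> [0..<Suc n]"
  define a0 where "a0 = fstA A xs"
  have key: "a0 \<in> A \<and> inv \<sigma> a0 \<le> inv \<sigma> a" if a: "a \<in> A" for a
  proof -
    have an: "a \<le> n" using a A by auto
    have "inv \<sigma> a < length xs" "xs ! (inv \<sigma> a) \<in> A" using inv_pos[OF s an] a by (auto simp: xs_def)
    from fstA_min[OF this] obtain j where j: "a0 \<in> A" "j \<le> inv \<sigma> a" "xs ! j = a0" unfolding a0_def by blast
    have "j \<le> n" using j(2) inv_pos[OF s an] by linarith
    then have "\<sigma> j = a0" using j(3) by (simp del: upt_Suc add: xs_def nth_map)
    then have "inv \<sigma> a0 = j" using s permutes_inverses(2) by fastforce
    then show ?thesis using j by simp
  qed
  obtain a1 where "a1 \<in> A" using A by auto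
  then have a0A: "a0 \<in> A" using key by blast
  have "arg_min (\<lambda>B. sorted_list_of_set (inv \<sigma> ` B)) (\<lambda>B. B \<in> Bs) = {a0}"
  proof (rule argmin_unique)
    show "{a0} \<in> Bs" using a0A Bs by auto
  next
    fix y assume y: "y \<in> Bs" "y \<noteq> {a0}"
    then obtain a where a: "a \<in> A" "y = {a}" "a \<noteq> a0" using Bs by auto
    have "inv \<sigma> a0 \<noteq> inv \<sigma> a"
    proof
      assume "inv \<sigma> a0 = inv \<sigma> a"
      then have "\<sigma> (inv \<sigma> a0) = \<sigma> (inv \<sigma> a)" by simp
      moreover have "a0 \<le> n" "a \<le> n" using a a0A A by auto
      ultimately show False using a(3) inv_pos(3)[OF s, of a0] inv_pos(3)[OF s, of a] by simp
    qed
    then have "inv \<sigma> a0 < inv \<sigma> a" using key[OF a(1)] by simp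
    then show "sorted_list_of_set (inv \<sigma> ` {a0}) < sorted_list_of_set (inv \<sigma> ` y)" using a by simp
  qed
  then show ?thesis unfolding lexfirst_basis_def a0_def xs_def by simp
qed

lemma sorted_minus:
  assumes "k \<le> n"
  shows "sorted_list_of_set ({..n} - {k}) = [0..<k] @ [Suc k..<Suc n]"
proof (rule sorted_distinct_set_unique)
  show "set (sorted_list_of_set ({..n} - {k})) = set ([0..<k] @ [Suc k..<Suc n])"
    using assms by auto
qed (auto simp: sorted_append)

lemma lex_minus:
  assumes "k < k0" "k0 \<le> n"
  shows "[0..<k0] @ [Suc k0..<Suc n] < [0..<k] @ [Suc k..<Suc n]"
proof -
  have "[0..<k0] = [0..<k] @ k # [Suc k..<k0]"
    using assms upt_add_eq_append[of 0 k "k0 - k"] upt_conv_Cons[of k k0] by simp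
  moreover have "[Suc k..<Suc n] = Suc k # [Suc (Suc k)..<Suc n]"
    using assms upt_conv_Cons[of "Suc k" "Suc n"] by simp
  ultimately show ?thesis using append_less[of k "Suc k" "[0..<k]"] by simp
qed

lemma rev_map_upt: "rev (map \<sigma> [0..<Suc n]) = map (\<lambda>i. \<sigma> (n - i)) [0..<Suc n]"
  by (intro nth_equalityI) (auto simp del: upt_Suc simp: rev_nth nth_map)

lemma lex_first_cosingletons:
  assumes s: "\<sigma> permutes {..n}" and C: "C \<subseteq> {..n}" "C \<noteq> {}" and Bs: "Bs = (\<lambda>c. {..n} - {c}) ` C"
  shows "lexfirst_basis \<sigma> Bs = {..n} - {fstA C (rev (map \<sigma> [0..<Suc n]))}"
proof -
  define ys where "ys = rev (map \<sigma> [0..<Suc n])"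
  define c0 where "c0 = fstA C ys"
  have ys': "ys = map (\<lambda>i. \<sigma> (n - i)) [0..<Suc n]" unfolding ys_def by (rule rev_map_upt)
  have key: "c0 \<in> C \<and> inv \<sigma> c \<le> inv \<sigma> c0" if c: "c \<in> C" for c
  proof -
    have cn: "c \<le> n" using c C by auto
    have "n - inv \<sigma> c < length ys" "ys ! (n - inv \<sigma> c) \<in> C"
      using inv_pos[OF s cn] c by (auto simp del: upt_Suc simp: ys' nth_map)
    from fstA_min[OF this] obtain j where j: "c0 \<in> C" "j \<le> n - inv \<sigma> c" "ys ! j = c0" unfolding c0_def by blast
    have "j \<le> n" using j(2) by linarith
    then have "\<sigma> (n - j) = c0" using j(3) by (simp del: upt_Suc add: ys' nth_map)
    then have "inv \<sigma> c0 = n - j" using s permutes_inverses(2) by fastforce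
    then show ?thesis using j inv_pos(1)[OF s cn] by simp
  qed
  obtain c1 where "c1 \<in> C" using C by auto
  then have c0C: "c0 \<in> C" using key by blast
  have invS: "inv \<sigma> ` ({..n} - {c}) = {..n} - {inv \<sigma> c}" for c
  proof -
    have p: "inv \<sigma> permutes {..n}" using s by (rule permutes_inv)
    then have "inv \<sigma> ` ({..n} - {c}) = inv \<sigma> ` {..n} - inv \<sigma> ` {c}"
      by (intro image_set_diff permutes_inj)
    then show ?thesis using permutes_image[OF p] by simp
  qed
  have "arg_min (\<lambda>B. sorted_list_of_set (inv \<sigma> ` B)) (\<lambda>B. B \<in> Bs) = {..n} - {c0}"
  proof (rule argmin_unique)
    show "{..n} - {c0} \<in> Bs" using c0C Bs by auto
  next
    fix y assume y: "y \<in> Bs" "y \<noteq> {..n} - {c0}"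
    then obtain c where c: "c \<in> C" "y = {..n} - {c}" "c \<noteq> c0" using Bs by auto
    have "inv \<sigma> c0 \<noteq> inv \<sigma> c"
    proof
      assume "inv \<sigma> c0 = inv \<sigma> c"
      then have "\<sigma> (inv \<sigma> c0) = \<sigma> (inv \<sigma> c)" by simp
      moreover have "c0 \<le> n" "c \<le> n" using c c0C C by auto
      ultimately show False using c(3) inv_pos(3)[OF s, of c0] inv_pos(3)[OF s, of c] by simp
    qed
    then have lt: "inv \<sigma> c < inv \<sigma> c0" using key[OF c(1)] by simp
    have n0: "inv \<sigma> c0 \<le> n" using inv_pos(1)[OF s] c0C C by auto
    then have "sorted_list_of_set ({..n} - {inv \<sigma> c0}) < sorted_list_of_set ({..n} - {inv \<sigma> c})"
      using lt sorted_minus lex_minus by simp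
    then show "sorted_list_of_set (inv \<sigma> ` ({..n} - {c0})) < sorted_list_of_set (inv \<sigma> ` y)"
      using c invS by simp
  qed
  then show ?thesis unfolding lexfirst_basis_def c0_def ys_def by simp
qed


lemma elem_sym_0:
  assumes "finite S"
  shows "elem_sym 0 S x = 1"
proof -
  have E: "{S'. S' \<subseteq> S \<and> card S' = 0} = {{}}"
  proof (intro equalityI subsetI)
    fix S' assume "S' \<in> {S'. S' \<subseteq> S \<and> card S' = 0}"
    then have "S' \<subseteq> S" "card S' = 0" by auto
    then have "S' = {}" using assms finite_subset by fastforce
    then show "S' \<in> {{}}" by simp
  qed simp
  show ?thesis unfolding elem_sym_def E by simp
qed

lemma uniform_ne:
  assumes "k \<le> Suc n"
  shows "{..<k} \<in> uniform_bases n k"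
  using assms unfolding uniform_bases_def by auto

lemma Z_E:
  fixes t :: "nat \<Rightarrow> real"
  assumes "n \<ge> 1" "inj_on t {..n}"
  shows "(\<Sum>a\<in>{..n}. K / (\<Prod>w\<in>{..n}-{a}. t a - t w)) = 0"
proof -
  have E: "{..n} = insert 0 ({..n} - {0})" by auto
  have "(\<Sum>a\<in>{..n}. 1 / (\<Prod>w\<in>{..n}-{a}. t a - t w)) = 0"
    using Zsum[of "{..n} - {0}" 0 t] assms E by (metis Diff_iff Diff_empty Diff_insert0 finite_Diff finite_atMost
        atMost_iff insertI1 le_zero_eq not_one_le_zero insert_Diff_single insert_absorb singleton_iff)
  then have "K * (\<Sum>a\<in>{..n}. 1 / (\<Prod>w\<in>{..n}-{a}. t a - t w)) = 0" by simp
  then show ?thesis by (simp add: sum_distrib_left)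
qed

lemma LG0:
  fixes t :: "nat \<Rightarrow> real"
  assumes "inj_on t {..n}"
  shows "(\<Sum>a\<in>{..n}. (\<Prod>w\<in>{..n}-{a}. - t w) / (\<Prod>w\<in>{..n}-{a}. t a - t w)) = 1"
  using LG[of "{..n}" t 0] assms by simp

lemma lexfirst_in:
  assumes "finite Bs" "Bs \<noteq> {}"
  shows "lexfirst_basis \<sigma> Bs \<in> Bs"
  using arg_min_if_finite(1)[OF assms, of "\<lambda>B. sorted_list_of_set (inv \<sigma> ` B)"]
  unfolding lexfirst_basis_def arg_min_on_def .


lemma part1:
  fixes n :: nat and Bs :: "nat set set" and t :: "nat \<Rightarrow> real"
  assumes M: "matroid_bases n Bs" and inj: "inj_on t {..n}"
  shows "perm_integral n (cQ_top n Bs) t = (if is_loop n Bs \<or> Bs = uniform_bases n 1 then 1 else 0)"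
proof -
  have Bsub: "\<And>B. B \<in> Bs \<Longrightarrow> B \<subseteq> {..n}" and Bne: "Bs \<noteq> {}" using M unfolding matroid_bases_def by auto
  have finBs: "finite Bs" using Bsub by (intro finite_subset[of Bs "Pow {..n}"]) auto
  obtain B0 where B0: "B0 \<in> Bs" using Bne by auto
  define r where "r = card B0"
  have cardr: "\<And>B. B \<in> Bs \<Longrightarrow> card B = r" unfolding r_def using bases_card[OF M] B0 by blast
  have finB: "\<And>B. B \<in> Bs \<Longrightarrow> finite B" using Bsub finite_subset by blast
  have rle: "r \<le> Suc n" using card_mono[OF _ Bsub[OF B0]] cardr[OF B0] by simp
  have uni: "r = k" if "Bs = uniform_bases n k" "k \<le> Suc n" for k
    using uniform_ne[OF that(2)] that(1) cardr by fastforce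
  have loop: "r = 0" if "is_loop n Bs"
    using that cardr unfolding is_loop_def by fastforce
  consider (r0) "r = 0" | (r1) "r = 1" | (r2) "r \<ge> 2" by linarith
  then show ?thesis
  proof cases
    case r2
    have "cQ_top n Bs \<sigma> t = 0" for \<sigma>
    proof -
      let ?L = "lexfirst_basis \<sigma> Bs"
      have L: "?L \<in> Bs" by (rule lexfirst_in[OF finBs Bne])
      have "card ({..n} - ?L) = Suc n - r" using card_Diff_subset[OF finB[OF L] Bsub[OF L]] cardr[OF L] by simp
      then have "card ({..n} - ?L) < n" using r2 rle by linarith
      then show ?thesis unfolding cQ_top_def by (intro elem_sym_zero) simp_all
    qed
    then have "perm_integral n (cQ_top n Bs) t = 0" unfolding perm_integral_def by simp
    moreover have "\<not> (is_loop n Bs \<or> Bs = uniform_bases n 1)" using loop uni[of 1] r2 by auto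
    ultimately show ?thesis by simp
  next
    case r0
    have "B = {}" if "B \<in> Bs" for B using cardr[OF that] finB[OF that] r0 by simp
    then have Bs1: "Bs = {{}}" using Bne by blast
    have L: "lexfirst_basis \<sigma> Bs = {}" for \<sigma> using lexfirst_in[OF finBs Bne] Bs1 by simp
    define K where "K = elem_sym n {..n} (\<lambda>i. - t i)"
    have "perm_integral n (cQ_top n Bs) t = (\<Sum>xs\<in>permutations_of_set {..n}. (\<lambda>_. K) (fstA {..n} xs) / Wl (map t xs))"
      by (rule perm_integral_list) (simp add: cQ_top_def L K_def)
    also have "\<dots> = (\<Sum>a\<in>{..n}. K / (\<Prod>w\<in>{..n}-{a}. t a - t w))"
      using Tsum[of "{..n}" "{..n}" t "\<lambda>_. K"] inj by simp
    finally have PI: "perm_integral n (cQ_top n Bs) t = (\<Sum>a\<in>{..n}. K / (\<Prod>w\<in>{..n}-{a}. t a - t w))" .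
    show ?thesis
    proof (cases "n = 0")
      case True
      then have "K = 1" using elem_sym_0 K_def by simp
      then show ?thesis using PI True Bs1 by (simp add: is_loop_def)
    next
      case False
      have "\<not> is_loop n Bs" using False by (simp add: is_loop_def)
      moreover have "Bs \<noteq> uniform_bases n 1" using uni[of 1] r0 by auto
      ultimately show ?thesis using PI Z_E[of n t K] False inj by simp
    qed
  next
    case r1
    define A where "A = {a. {a} \<in> Bs}"
    have BsA: "Bs = (\<lambda>a. {a}) ` A"
    proof (intro equalityI subsetI)
      fix B assume B: "B \<in> Bs"
      have "card B = 1" using cardr[OF B] r1 by simp
      then obtain a where "B = {a}" using card_1_singleton_iff[of B] by auto
      then show "B \<in> (\<lambda>a. {a}) ` A" using B by (auto simp: A_def)
    qed (auto simp: A_def)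
    have A1: "A \<subseteq> {..n}" unfolding A_def using Bsub by auto
    have A2: "A \<noteq> {}" using B0 BsA by auto
    note A = A1 A2
    define g where "g a = elem_sym n ({..n} - {a}) (\<lambda>i. - t i)" for a
    have "perm_integral n (cQ_top n Bs) t = (\<Sum>xs\<in>permutations_of_set {..n}. g (fstA A xs) / Wl (map t xs))"
      by (rule perm_integral_list) (simp add: cQ_top_def lex_first_singletons[OF _ A BsA] g_def)
    also have "\<dots> = (if {..n} = A then (\<Sum>a\<in>A. g a / (\<Prod>w\<in>A-{a}. t a - t w)) else 0)"
      using Tsum[OF _ A(1) A(2) inj] by simp
    finally have PI: "perm_integral n (cQ_top n Bs) t = (if {..n} = A then (\<Sum>a\<in>A. g a / (\<Prod>w\<in>A-{a}. t a - t w)) else 0)" .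
    show ?thesis
    proof (cases "A = {..n}")
      case True
      have g: "g a = (\<Prod>w\<in>{..n}-{a}. - t w)" if "a \<in> {..n}" for a
      proof -
        have "card ({..n} - {a}) = n" using that by simp
        then show ?thesis unfolding g_def using elem_sym_full[of "{..n} - {a}" "\<lambda>i. - t i"] by simp
      qed
      have "Bs = uniform_bases n 1"
        unfolding BsA True uniform_bases_def by (auto simp: card_1_singleton_iff)
      moreover have "(\<Sum>a\<in>A. g a / (\<Prod>w\<in>A-{a}. t a - t w)) = 1"
        unfolding True using g LG0[OF inj] by simp
      ultimately show ?thesis using PI True by simp
    next
      case False
      have "Bs \<noteq> uniform_bases n 1"
      proof
        assume "Bs = uniform_bases n 1"
        then have "A = {..n}" unfolding A_def uniform_bases_def by auto
        then show False using False by simp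
      qed
      moreover have "\<not> is_loop n Bs" using loop r1 by auto
      ultimately show ?thesis using PI False by auto
    qed
  qed
qed


lemma cosingleton:
  assumes "B \<subseteq> {..n}" "card B = n"
  shows "\<exists>c\<le>n. B = {..n} - {c}"
proof -
  have "finite B" using assms(1) finite_subset by blast
  then have "card ({..n} - B) = 1" using card_Diff_subset[of B "{..n}"] assms by simp
  then obtain c where c: "{..n} - B = {c}" using card_1_singleton_iff[of "{..n} - B"] by auto
  then have "c \<le> n" by auto
  moreover have "B = {..n} - {c}" using c double_diff[of B "{..n}" "{..n}"] assms(1) by simp
  ultimately show ?thesis by blast
qed

lemma neg_pow_div: "(x::real) / ((-1) ^ n * w) = (-1) ^ n * (x / w)"
  by (cases "even n") simp_all

lemma part2:
  fixes n :: nat and Bs :: "nat set set" and t :: "nat \<Rightarrow> real"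
  assumes M: "matroid_bases n Bs" and inj: "inj_on t {..n}"
  shows "perm_integral n (cSdual_top n Bs) t = (if is_coloop n Bs \<or> Bs = uniform_bases n n then 1 else 0)"
proof -
  have Bsub: "\<And>B. B \<in> Bs \<Longrightarrow> B \<subseteq> {..n}" and Bne: "Bs \<noteq> {}" using M unfolding matroid_bases_def by auto
  have finBs: "finite Bs" using Bsub by (intro finite_subset[of Bs "Pow {..n}"]) auto
  obtain B0 where B0: "B0 \<in> Bs" using Bne by auto
  define r where "r = card B0"
  have cardr: "\<And>B. B \<in> Bs \<Longrightarrow> card B = r" unfolding r_def using bases_card[OF M] B0 by blast
  have finB: "\<And>B. B \<in> Bs \<Longrightarrow> finite B" using Bsub finite_subset by blast
  have rle: "r \<le> Suc n" using card_mono[OF _ Bsub[OF B0]] cardr[OF B0] by simp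
  have uni: "r = k" if "Bs = uniform_bases n k" "k \<le> Suc n" for k
    using uniform_ne[OF that(2)] that(1) cardr by fastforce
  have colo: "r = 1 \<and> n = 0" if "is_coloop n Bs"
    using that cardr unfolding is_coloop_def by fastforce
  consider (rl) "r < n" | (rn) "r = n" | (rs) "r = Suc n" using rle by linarith
  then show ?thesis
  proof cases
    case rl
    have "cSdual_top n Bs \<sigma> t = 0" for \<sigma>
    proof -
      let ?L = "lexfirst_basis \<sigma> Bs"
      have L: "?L \<in> Bs" by (rule lexfirst_in[OF finBs Bne])
      show ?thesis unfolding cSdual_top_def using cardr[OF L] rl finB[OF L] by (intro elem_sym_zero) simp_all
    qed
    then have "perm_integral n (cSdual_top n Bs) t = 0" unfolding perm_integral_def by simp
    moreover have "\<not> (is_coloop n Bs \<or> Bs = uniform_bases n n)" using colo uni[of n] rl by auto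
    ultimately show ?thesis by simp
  next
    case rs
    have "B = {..n}" if "B \<in> Bs" for B using cardr[OF that] Bsub[OF that] rs card_subset_eq[of "{..n}" B] by simp
    then have Bs1: "Bs = {{..n}}" using Bne by blast
    have L: "lexfirst_basis \<sigma> Bs = {..n}" for \<sigma> using lexfirst_in[OF finBs Bne] Bs1 by simp
    define K where "K = elem_sym n {..n} t"
    have "perm_integral n (cSdual_top n Bs) t = (\<Sum>xs\<in>permutations_of_set {..n}. (\<lambda>_. K) (fstA {..n} xs) / Wl (map t xs))"
      by (rule perm_integral_list) (simp add: cSdual_top_def L K_def)
    also have "\<dots> = (\<Sum>a\<in>{..n}. K / (\<Prod>w\<in>{..n}-{a}. t a - t w))"
      using Tsum[of "{..n}" "{..n}" t "\<lambda>_. K"] inj by simp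
    finally have PI: "perm_integral n (cSdual_top n Bs) t = (\<Sum>a\<in>{..n}. K / (\<Prod>w\<in>{..n}-{a}. t a - t w))" .
    show ?thesis
    proof (cases "n = 0")
      case True
      then have "K = 1" using elem_sym_0 K_def by simp
      moreover have "is_coloop n Bs" using True Bs1 by (auto simp: is_coloop_def)
      ultimately show ?thesis using PI True by simp
    next
      case False
      have "\<not> is_coloop n Bs" using False by (simp add: is_coloop_def)
      moreover have "Bs \<noteq> uniform_bases n n" using uni[of n] rs by auto
      ultimately show ?thesis using PI Z_E[of n t K] False inj by simp
    qed
  next
    case rn
    define C where "C = {c. c \<le> n \<and> {..n} - {c} \<in> Bs}"
    have BsC: "Bs = (\<lambda>c. {..n} - {c}) ` C"
    proof (intro equalityI subsetI)
      fix B assume B: "B \<in> Bs"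
      obtain c where "c \<le> n" "B = {..n} - {c}" using cosingleton[OF Bsub[OF B]] cardr[OF B] rn by auto
      then show "B \<in> (\<lambda>c. {..n} - {c}) ` C" using B unfolding C_def by auto
    qed (auto simp: C_def)
    have C1: "C \<subseteq> {..n}" unfolding C_def by auto
    have C2: "C \<noteq> {}" using B0 BsC by auto
    note C = C1 C2
    define g where "g c = elem_sym n ({..n} - {c}) t" for c
    define P where "P = permutations_of_set {..n}"
    have "perm_integral n (cSdual_top n Bs) t = (\<Sum>xs\<in>P. g (fstA C (rev xs)) / Wl (map t xs))"
      unfolding P_def
      by (rule perm_integral_list) (simp add: cSdual_top_def lex_first_cosingletons[OF _ C BsC] g_def)
    also have "\<dots> = (\<Sum>ys\<in>P. g (fstA C (rev (rev ys))) / Wl (map t (rev ys)))"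
    proof -
      have "bij_betw rev P P" unfolding P_def
        by (rule bij_betw_imageI) (auto simp: inj_on_def)
      then show ?thesis by (rule sum.reindex_bij_betw[symmetric])
    qed
    also have "\<dots> = (\<Sum>ys\<in>P. (-1) ^ n * (g (fstA C ys) / Wl (map t ys)))"
    proof (rule sum.cong[OF refl])
      fix ys assume ys: "ys \<in> P"
      have "length ys = Suc n" using length_finite_permutations_of_set[of ys "{..n}"] ys by (simp add: P_def)
      then have "Wl (map t (rev ys)) = (-1) ^ n * Wl (map t ys)" using Wl_rev[of "map t ys"] by (simp add: rev_map)
      then show "g (fstA C (rev (rev ys))) / Wl (map t (rev ys)) = (-1) ^ n * (g (fstA C ys) / Wl (map t ys))"
        using neg_pow_div by simp
    qed
    also have "\<dots> = (-1) ^ n * (if {..n} = C then (\<Sum>a\<in>C. g a / (\<Prod>w\<in>C-{a}. t a - t w)) else 0)"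
      unfolding sum_distrib_left[symmetric] P_def using Tsum[OF _ C(1) C(2) inj] by simp
    finally have PI: "perm_integral n (cSdual_top n Bs) t = (-1) ^ n * (if {..n} = C then (\<Sum>a\<in>C. g a / (\<Prod>w\<in>C-{a}. t a - t w)) else 0)" .
    show ?thesis
    proof (cases "C = {..n}")
      case True
      have g: "g a = (-1) ^ n * (\<Prod>w\<in>{..n}-{a}. - t w)" if "a \<in> {..n}" for a
      proof -
        have cn: "card ({..n} - {a}) = n" using that by simp
        then have "g a = (\<Prod>w\<in>{..n}-{a}. t w)" unfolding g_def using elem_sym_full[of "{..n} - {a}" t] by simp
        also have "\<dots> = (-1) ^ n * (\<Prod>w\<in>{..n}-{a}. - t w)"
          unfolding prod_uminus cn by (simp add: mult.assoc[symmetric] power_mult_distrib[symmetric])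
        finally show ?thesis .
      qed
      have "Bs = uniform_bases n n"
      proof (intro equalityI subsetI)
        fix B assume "B \<in> Bs"
        then show "B \<in> uniform_bases n n" using Bsub cardr rn unfolding uniform_bases_def by auto
      next
        fix B assume "B \<in> uniform_bases n n"
        then have "B \<subseteq> {..n}" "card B = n" unfolding uniform_bases_def by auto
        then obtain c where "c \<le> n" "B = {..n} - {c}" using cosingleton by blast
        then show "B \<in> Bs" using True unfolding C_def by auto
      qed
      moreover have "(\<Sum>a\<in>C. g a / (\<Prod>w\<in>C-{a}. t a - t w)) = (-1) ^ n"
      proof -
        have "(\<Sum>a\<in>C. g a / (\<Prod>w\<in>C-{a}. t a - t w)) = (\<Sum>a\<in>{..n}. (-1) ^ n * ((\<Prod>w\<in>{..n}-{a}. - t w) / (\<Prod>w\<in>{..n}-{a}. t a - t w)))"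
          unfolding True by (rule sum.cong[OF refl]) (simp add: g)
        also have "\<dots> = (-1) ^ n" unfolding sum_distrib_left[symmetric] LG0[OF inj] by simp
        finally show ?thesis .
      qed
      ultimately show ?thesis using PI True by simp
    next
      case False
      have "Bs \<noteq> uniform_bases n n"
      proof
        assume U: "Bs = uniform_bases n n"
        have "c \<in> C" if "c \<le> n" for c
          using that unfolding C_def U uniform_bases_def by auto
        then have "C = {..n}" using C1 by auto
        then show False using False by simp
      qed
      moreover have "\<not> is_coloop n Bs" using colo rn by auto
      ultimately show ?thesis using PI False by auto
    qed
  qed
qed

theorem lemma7p3:
  fixes n :: nat and Bs :: "nat set set" and t :: "nat \<Rightarrow> real"
  assumes "matroid_bases n Bs"
    and "inj_on t {..n}"
  shows "perm_integral n (cQ_top n Bs) t =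
           (if is_loop n Bs \<or> Bs = uniform_bases n 1 then 1 else 0)
       \<and> perm_integral n (cSdual_top n Bs) t =
           (if is_coloop n Bs \<or> Bs = uniform_bases n n then 1 else 0)"
  using part1[OF assms] part2[OF assms] by simp

end
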